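(* For every integer $m\ge2$ and every graph $G$, $\hom(S_{2,1^0};G)\cdot\hom(S_{2,1^{m-2}};G)^2\ge \hom(S_{2,1^{m-1}};G)^2$.
   Context: All graphs are finite; $\hom(H;G)$ is the number of graph homomorphisms from $H$ to $G$. For $k\ge0$, $S_{2,1^k}$ is the tree with vertex set $\{1,\ldots,k+3\}$ and edge set $\{\{1,j\}:2\le j\le k+2\}\cup\{\{k+2,k+3\}\}$. *)

theory Defs
  imports Main "HOL-Library.FuncSet"
begin

definition is_graph :: "'a set \<Rightarrow> ('a \<Rightarrow> 'a \<Rightarrow> bool) \<Rightarrow> bool" where
  "is_graph V E \<longleftrightarrow> finite V \<and> (\<forall>x y. E x y \<longrightarrow> x \<in> V \<and> y \<in> V)
     \<and> (\<forall>x y. E x y \<longrightarrow> E y x) \<and> (\<forall>x. \<not> E x x)"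

definition hom_count :: "'b set \<Rightarrow> 'b set set \<Rightarrow> 'a set \<Rightarrow> ('a \<Rightarrow> 'a \<Rightarrow> bool) \<Rightarrow> nat" where
  "hom_count VH EH V E =
     card {f \<in> VH \<rightarrow>\<^sub>E V. \<forall>x\<in>VH. \<forall>y\<in>VH. {x, y} \<in> EH \<longrightarrow> E (f x) (f y)}"

definition S_verts :: "nat \<Rightarrow> nat set" where
  "S_verts k = {1..k+3}"

definition S_edges :: "nat \<Rightarrow> nat set set" where
  "S_edges k = {{1, j} | j. 2 \<le> j \<and> j \<le> k + 2} \<union> {{k + 2, k + 3}}"

definition hom_S :: "nat \<Rightarrow> 'a set \<Rightarrow> ('a \<Rightarrow> 'a \<Rightarrow> bool) \<Rightarrow> nat" where
  "hom_S k V E = hom_count (S_verts k) (S_edges k) V E"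

end

theory Submission
  imports Defs
begin

definition HS :: "nat \<Rightarrow> 'a set \<Rightarrow> ('a \<Rightarrow> 'a \<Rightarrow> bool) \<Rightarrow> (nat \<Rightarrow> 'a) set" where
  "HS k V E = {f \<in> {1..k+3} \<rightarrow>\<^sub>E V. (\<forall>j. 2 \<le> j \<and> j \<le> k+2 \<longrightarrow> E (f 1) (f j))
      \<and> E (f (k+2)) (f (k+3))}"

definition nb :: "'a set \<Rightarrow> ('a \<Rightarrow> 'a \<Rightarrow> bool) \<Rightarrow> 'a \<Rightarrow> 'a set" where
  "nb V E v = {u \<in> V. E v u}"

lemma hom_S_HS:
  assumes g: "is_graph V E"
  shows "hom_S k V E = card (HS k V E)"
proof -
  have sym: "\<And>x y. E x y \<Longrightarrow> E y x" using g unfolding is_graph_def by blast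
  have "{f \<in> S_verts k \<rightarrow>\<^sub>E V. \<forall>x\<in>S_verts k. \<forall>y\<in>S_verts k. {x, y} \<in> S_edges k \<longrightarrow> E (f x) (f y)}
        = HS k V E"
  proof (intro set_eqI iffI)
    fix f assume f: "f \<in> {f \<in> S_verts k \<rightarrow>\<^sub>E V. \<forall>x\<in>S_verts k. \<forall>y\<in>S_verts k. {x, y} \<in> S_edges k \<longrightarrow> E (f x) (f y)}"
    have a: "\<And>j. 2 \<le> j \<and> j \<le> k+2 \<Longrightarrow> E (f 1) (f j)"
    proof -
      fix j assume "2 \<le> j \<and> j \<le> k+2"
      then have "{1,j} \<in> S_edges k" "1 \<in> S_verts k" "j \<in> S_verts k"
        unfolding S_edges_def S_verts_def by auto
      then show "E (f 1) (f j)" using f by blast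
    qed
    have "{k+2,k+3} \<in> S_edges k" "k+2 \<in> S_verts k" "k+3 \<in> S_verts k"
      unfolding S_edges_def S_verts_def by auto
    then have "E (f (k+2)) (f (k+3))" using f by blast
    then show "f \<in> HS k V E" using a f unfolding HS_def S_verts_def by auto
  next
    fix f assume f: "f \<in> HS k V E"
    have "\<forall>x\<in>S_verts k. \<forall>y\<in>S_verts k. {x, y} \<in> S_edges k \<longrightarrow> E (f x) (f y)"
    proof (intro ballI impI)
      fix x y assume "x \<in> S_verts k" "y \<in> S_verts k" "{x, y} \<in> S_edges k"
      then consider j where "2 \<le> j" "j \<le> k+2" "{x,y} = {1,j}" | "{x,y} = {k+2,k+3}"
        unfolding S_edges_def by blast
      then show "E (f x) (f y)"
      proof cases
        case (1 j)
        then have "(x = 1 \<and> y = j) \<or> (x = j \<and> y = 1)" by (auto simp: doubleton_eq_iff)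
        then show ?thesis using 1 f sym unfolding HS_def by auto
      next
        case 2
        then have "(x = k+2 \<and> y = k+3) \<or> (x = k+3 \<and> y = k+2)" by (auto simp: doubleton_eq_iff)
        then show ?thesis using f sym unfolding HS_def by auto
      qed
    qed
    then show "f \<in> {f \<in> S_verts k \<rightarrow>\<^sub>E V. \<forall>x\<in>S_verts k. \<forall>y\<in>S_verts k. {x, y} \<in> S_edges k \<longrightarrow> E (f x) (f y)}"
      using f unfolding HS_def S_verts_def by auto
  qed
  then show ?thesis unfolding hom_S_def hom_count_def by simp
qed

lemma HS_finite:
  assumes g: "is_graph V E"
  shows "finite (HS k V E)"
proof -
  have "finite ({1..k+3} \<rightarrow>\<^sub>E V)" using g unfolding is_graph_def by (simp add: finite_PiE)
  then show ?thesis unfolding HS_def by (rule rev_finite_subset) auto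
qed

lemma deg_sq:
  assumes g: "is_graph V E" and v: "v \<in> V"
  shows "(card (nb V E v))^2 \<le> card (HS 0 V E)"
proof -
  let ?N = "nb V E v"
  define psi where "psi = (\<lambda>(a::'a,b::'a). (\<lambda>j::nat. if j = 1 then a else if j = 2 then v else if j = 3 then b else undefined))"
  have sym: "\<And>x y. E x y \<Longrightarrow> E y x" using g unfolding is_graph_def by blast
  have inj: "inj_on psi (?N \<times> ?N)"
  proof (rule inj_onI)
    fix p q assume "p \<in> ?N \<times> ?N" "q \<in> ?N \<times> ?N" "psi p = psi q"
    then have "psi p 1 = psi q 1" "psi p 3 = psi q 3" by auto
    then show "p = q" unfolding psi_def by (cases p, cases q) auto
  qed
  have sub: "psi ` (?N \<times> ?N) \<subseteq> HS 0 V E"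
  proof
    fix f assume "f \<in> psi ` (?N \<times> ?N)"
    then obtain a b where ab: "a \<in> ?N" "b \<in> ?N" "f = psi (a,b)" by auto
    have j: "\<And>j. 2 \<le> j \<and> j \<le> (2::nat) \<Longrightarrow> j = 2" by auto
    show "f \<in> HS 0 V E" using ab v sym unfolding HS_def psi_def nb_def
      by (auto simp: PiE_def extensional_def dest: j)
  qed
  have "card (?N \<times> ?N) \<le> card (HS 0 V E)"
    using card_inj_on_le[OF inj sub HS_finite[OF g]] .
  then show ?thesis by (simp add: power2_eq_square card_cartesian_product)
qed

lemma step:
  assumes g: "is_graph V E" and D: "\<And>v. v \<in> V \<Longrightarrow> card (nb V E v) \<le> D"
  shows "card (HS (Suc k) V E) \<le> D * card (HS k V E)"
proof -
  define phi where "phi = (\<lambda>f::nat \<Rightarrow> 'a. ((\<lambda>j::nat. if j = 1 then f 1 else if j \<in> {2..k+3} then f (j+1) else undefined), f 2))"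
  have inj: "inj_on phi (HS (Suc k) V E)"
  proof (rule inj_onI)
    fix f f' assume f: "f \<in> HS (Suc k) V E" and f': "f' \<in> HS (Suc k) V E" and eq: "phi f = phi f'"
    show "f = f'"
    proof
      fix j
      show "f j = f' j"
      proof (cases "j \<in> {1..k+4}")
        case True
        then consider "j = 1" | "j = 2" | "j - 1 \<in> {2..k+3}" "j = (j - 1) + 1" by force
        then show ?thesis
        proof cases
          case 1 then show ?thesis using fun_cong[OF arg_cong[where f=fst, OF eq], of 1] unfolding phi_def by simp
        next
          case 2 then show ?thesis using arg_cong[where f=snd, OF eq] unfolding phi_def by simp
        next
          case 3
          then have "fst (phi f) (j-1) = fst (phi f') (j-1)" using eq by simp
          then show ?thesis using 3 unfolding phi_def by (auto split: if_splits)
        qed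
      next
        case False
        then show ?thesis using f f' unfolding HS_def by (auto simp: PiE_def extensional_def)
      qed
    qed
  qed
  have sub: "phi ` HS (Suc k) V E \<subseteq> Sigma (HS k V E) (\<lambda>g. nb V E (g 1))"
  proof
    fix p assume "p \<in> phi ` HS (Suc k) V E"
    then obtain f where f: "f \<in> HS (Suc k) V E" and p: "p = phi f" by auto
    have fV: "\<And>j. j \<in> {1..k+4} \<Longrightarrow> f j \<in> V" using f unfolding HS_def by auto
    have fE: "\<And>j. 2 \<le> j \<Longrightarrow> j \<le> k+3 \<Longrightarrow> E (f 1) (f j)" using f unfolding HS_def by auto
    have fE2: "E (f (k+3)) (f (k+4))" using f unfolding HS_def by (auto simp: numeral_eq_Suc)
    have "fst p \<in> HS k V E"
      unfolding HS_def p phi_def using fV fE fE2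
      by (auto simp: PiE_def extensional_def Pi_def numeral_eq_Suc)
    moreover have "snd p \<in> nb V E (fst p 1)"
      unfolding nb_def p phi_def using fV fE by auto
    ultimately show "p \<in> Sigma (HS k V E) (\<lambda>g. nb V E (g 1))" by (cases p) auto
  qed
  have fin: "finite (Sigma (HS k V E) (\<lambda>g. nb V E (g 1)))"
    using HS_finite[OF g] g unfolding is_graph_def nb_def by auto
  have "card (HS (Suc k) V E) \<le> card (Sigma (HS k V E) (\<lambda>g. nb V E (g 1)))"
    using card_inj_on_le[OF inj sub fin] .
  also have "\<dots> = (\<Sum>g\<in>HS k V E. card (nb V E (g 1)))"
    using HS_finite[OF g] g unfolding is_graph_def nb_def by (subst card_SigmaI) auto
  also have "\<dots> \<le> (\<Sum>g\<in>HS k V E. D)"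
  proof (rule sum_mono)
    fix g assume "g \<in> HS k V E"
    then have "g 1 \<in> V" unfolding HS_def by auto
    then show "card (nb V E (g 1)) \<le> D" by (rule D)
  qed
  also have "\<dots> = D * card (HS k V E)" by simp
  finally show ?thesis .
qed

theorem theorem3p3:
  fixes V :: "'a set" and E :: "'a \<Rightarrow> 'a \<Rightarrow> bool" and m :: nat
  assumes "is_graph V E" and "m \<ge> 2"
  shows "hom_S 0 V E * (hom_S (m - 2) V E)^2 \<ge> (hom_S (m - 1) V E)^2"
proof -
  have g: "is_graph V E" by fact
  define D where "D = Max (insert 0 ((\<lambda>v. card (nb V E v)) ` V))"
  have finV: "finite V" using g unfolding is_graph_def by auto
  have Dle: "\<And>v. v \<in> V \<Longrightarrow> card (nb V E v) \<le> D"
    unfolding D_def using finV by (intro Max_ge) auto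
  have D2: "D^2 \<le> card (HS 0 V E)"
  proof -
    have "D \<in> insert 0 ((\<lambda>v. card (nb V E v)) ` V)"
      unfolding D_def using finV by (intro Max_in) auto
    then show ?thesis using deg_sq[OF g] by auto
  qed
  obtain k where k: "m - 2 = k" "m - 1 = Suc k" using assms(2) by (intro that[of "m-2"]) auto
  have st: "card (HS (Suc k) V E) \<le> D * card (HS k V E)" by (rule step[OF g Dle])
  have "(card (HS (Suc k) V E))^2 \<le> (D * card (HS k V E))^2"
    using st by (rule power_mono) simp
  also have "\<dots> = D^2 * (card (HS k V E))^2" by (simp add: power_mult_distrib)
  also have "\<dots> \<le> card (HS 0 V E) * (card (HS k V E))^2"
    using D2 by (rule mult_right_mono) simp
  finally show ?thesis unfolding k hom_S_HS[OF g] .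
qed

end
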